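(* Let $d\ge 1$ and let $\mathcal{C}$ be a chordal $d$-uniform clutter on the vertex set $[n]$ with a simplicial order $e_1,\ldots,e_r$, and let $\{N_1,\ldots,N_r\}$ be the simplicial multiset associated with this order. Put $M_i=\sum_{k=1}^r\binom{N_k}{i}$ and let $\Delta=\Delta(\mathcal{C})$ be the clique complex of $\mathcal{C}$. Then \[ \mathbf{f}_\Delta(t)=\sum_{i=0}^{d-1}\binom{n}{i}t^i+t^{d-1}\sum_{i\ge 1}M_i t^i=\sum_{i=0}^{d-1}\binom{n}{i}t^i+t^{d-1}\sum_{i=1}^{r}\big((1+t)^{N_i}-1\big). \] In particular, $\dim\Delta=\max\{N_1,\ldots,N_r\}+(d-2)$.
   Context: A $d$-uniform clutter $\mathcal{C}$ on $[n]$ is a set of $d$-element subsets of $[n]$ (its circuits). A $(d-1)$-subset $e\subset[n]$ is a submaximal circuit of $\mathcal{C}$ if $e\subset F$ for some $F\in\mathcal{C}$. A subset $V\subseteq[n]$ is a clique of $\mathcal{C}$ if every $d$-subset of $V$ belongs to $\mathcal{C}$ (subsets with fewer than $d$ elements are cliques). The clique complex $\Delta(\mathcal{C})$ is the simplicial complex of all cliques. For a $(d-1)$-subset $e$, the open neighborhood is $\mathrm{N}_{\mathcal{C}}(e)=\{c\in[n]: e\cup\{c\}\in\mathcal{C}\}$ and the closed neighborhood is $\mathrm{N}_{\mathcal{C}}[e]=e\cup\mathrm{N}_{\mathcal{C}}(e)$; $e$ is simplicial in $\mathcal{C}$ if $e$ is a submaximal circuit of $\mathcal{C}$ and $\mathrm{N}_{\mathcal{C}}[e]$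 is a clique of $\mathcal{C}$. The deletion is $\mathcal{C}\setminus e=\{F\in\mathcal{C}: e\not\subset F\}$, and $\mathcal{C}_{e_1\cdots e_i}=(\cdots((\mathcal{C}\setminus e_1)\setminus e_2)\cdots)\setminus e_i$. A simplicial order of $\mathcal{C}$ is a sequence $e_1,\ldots,e_r$ of $(d-1)$-subsets such that $e_1$ is simplicial in $\mathcal{C}$, $e_i$ is simplicial in $\mathcal{C}_{e_1\cdots e_{i-1}}$ for $i>1$, and $\mathcal{C}_{e_1\cdots e_r}=\emptyset$; $\mathcal{C}$ is chordal if it admits a simplicial order (the empty clutter is chordal). The simplicial multiset of the order is $\{N_1,\ldots,N_r\}$ with $N_1=|\mathrm{N}_{\mathcal{C}}(e_1)|$ and $N_i=|\mathrm{N}_{\mathcal{C}_{e_1\cdots e_{i-1}}}(e_i)|$ for $i>1$. For a simplicial complex $\Delta$ with $f_{i}$ faces of dimension $i$ (so $f_{i-1}$ faces of cardinality $i$, $f_{-1}=1$), the $\mathbf{f}$-polynomial is $\mathbf{f}_\Delta(t)=\sum_{i\ge0}f_{i-1}t^i$. *)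

theory Defs
  imports "HOL-Computational_Algebra.Polynomial"
begin

definition is_clique :: "nat \<Rightarrow> nat set set \<Rightarrow> nat set \<Rightarrow> bool" where
  "is_clique d C V \<longleftrightarrow> (\<forall>S. S \<subseteq> V \<and> card S = d \<and> finite S \<longrightarrow> S \<in> C)"

definition clique_complex :: "nat \<Rightarrow> nat \<Rightarrow> nat set set \<Rightarrow> nat set set" where
  "clique_complex n d C = {V. V \<subseteq> {1..n} \<and> is_clique d C V}"

definition open_nbhd :: "nat \<Rightarrow> nat set set \<Rightarrow> nat set \<Rightarrow> nat set" where
  "open_nbhd n C e = {c \<in> {1..n}. e \<union> {c} \<in> C}"

definition closed_nbhd :: "nat \<Rightarrow> nat set set \<Rightarrow> nat set \<Rightarrow> nat set" where
  "closed_nbhd n C e = e \<union> open_nbhd n C e"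

definition submaximal :: "nat \<Rightarrow> nat set set \<Rightarrow> nat set \<Rightarrow> bool" where
  "submaximal d C e \<longleftrightarrow> finite e \<and> card e = d - 1 \<and> (\<exists>F\<in>C. e \<subseteq> F)"

definition simplicial :: "nat \<Rightarrow> nat \<Rightarrow> nat set set \<Rightarrow> nat set \<Rightarrow> bool" where
  "simplicial n d C e \<longleftrightarrow> submaximal d C e \<and> is_clique d C (closed_nbhd n C e)"

definition deletion :: "nat set set \<Rightarrow> nat set \<Rightarrow> nat set set" where
  "deletion C e = {F \<in> C. \<not> e \<subseteq> F}"

fun is_simplicial_order :: "nat \<Rightarrow> nat \<Rightarrow> nat set set \<Rightarrow> nat set list \<Rightarrow> bool" where
  "is_simplicial_order n d C [] \<longleftrightarrow> C = {}"
| "is_simplicial_order n d C (e # es) \<longleftrightarrow>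
     simplicial n d C e \<and> is_simplicial_order n d (deletion C e) es"

text \<open>The simplicial multiset [N_1,...,N_r] of an order, as a list.\<close>
fun simplicial_numbers :: "nat \<Rightarrow> nat set set \<Rightarrow> nat set list \<Rightarrow> nat list" where
  "simplicial_numbers n C [] = []"
| "simplicial_numbers n C (e # es) = card (open_nbhd n C e) # simplicial_numbers n (deletion C e) es"

definition uniform_clutter :: "nat \<Rightarrow> nat \<Rightarrow> nat set set \<Rightarrow> bool" where
  "uniform_clutter n d C \<longleftrightarrow> (\<forall>F\<in>C. F \<subseteq> {1..n} \<and> card F = d)"

definition f_poly :: "nat set set \<Rightarrow> int poly" where
  "f_poly \<Delta> = (\<Sum>\<sigma>\<in>\<Delta>. monom 1 (card \<sigma>))"

definition complex_dim :: "nat set set \<Rightarrow> int" where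
  "complex_dim \<Delta> = int (Max (card ` \<Delta>)) - 1"

end

theory Submission
  imports Defs
begin


lemma pow_binom: "([:1,1:] :: int poly) ^ N = (\<Sum>i\<le>N. monom (int (N choose i)) i)"
proof -
  have e: "([:1,1:] :: int poly) = monom 1 1 + 1"
    by (simp add: monom_Suc one_pCons)
  have "([:1,1:] :: int poly) ^ N = (\<Sum>k\<le>N. of_nat (N choose k) * (monom 1 1)^k * 1^(N-k))"
    unfolding e by (rule binomial_ring)
  also have "\<dots> = (\<Sum>i\<le>N. monom (int (N choose i)) i)"
    apply (rule sum.cong, simp)
    apply (simp add: monom_power of_nat_poly smult_monom)
    done
  finally show ?thesis .
qed

lemma pow_binom_n: assumes "N \<le> n"
  shows "([:1,1:] :: int poly) ^ N - 1 = (\<Sum>i\<in>{1..n}. monom (int (N choose i)) i)"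
proof -
  have "(\<Sum>i\<le>N. monom (int (N choose i)) i) = (\<Sum>i\<le>n. monom (int (N choose i)) i)"
    using assms by (intro sum.mono_neutral_left) auto
  also have "\<dots> = monom (int (N choose 0)) 0 + (\<Sum>i\<in>{1..n}. monom (int (N choose i)) i)"
  proof -
    have "{..n} = insert 0 {1..n}" by auto
    then show ?thesis by simp
  qed
  finally show ?thesis by (simp add: pow_binom)
qed

lemma sum_list_binom:
  assumes "\<forall>N\<in>set L. N \<le> n"
  shows "(\<Sum>N\<leftarrow>L. ([:1,1:] :: int poly) ^ N - 1) =
     (\<Sum>i\<in>{1..n}. monom (int (\<Sum>N\<leftarrow>L. N choose i)) i)"
  using assms
proof (induction L)
  case Nil then show ?case by simp
next
  case (Cons a L)
  then show ?case using pow_binom_n[of a n] by (simp add: sum.distrib add_monom[symmetric])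
qed

lemma sum_pow_card: "finite A \<Longrightarrow> (\<Sum>S\<in>Pow A. monom (1::int) (card S)) = [:1,1:] ^ card A"
proof (induction A rule: finite_induct)
  case empty then show ?case by simp
next
  case (insert a A)
  have p: "Pow (insert a A) = Pow A \<union> insert a ` Pow A" by (rule Pow_insert)
  have inj: "inj_on (insert a) (Pow A)" using insert by (auto simp: inj_on_def) 
  have d: "Pow A \<inter> insert a ` Pow A = {}" using insert by auto
  have "(\<Sum>S\<in>Pow (insert a A). monom (1::int) (card S)) =
     (\<Sum>S\<in>Pow A. monom 1 (card S)) + (\<Sum>S\<in>insert a ` Pow A. monom 1 (card S))"
    unfolding p using insert by (intro sum.union_disjoint) auto
  also have "(\<Sum>S\<in>insert a ` Pow A. monom (1::int) (card S)) = (\<Sum>S\<in>Pow A. monom 1 (card (insert a S)))"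
    using inj by (simp add: sum.reindex)
  also have "\<dots> = (\<Sum>S\<in>Pow A. monom 1 1 * monom 1 (card S))"
    apply (rule sum.cong, simp)
    using insert by (auto simp: mult_monom finite_subset card_insert_if subset_iff)
  also have "\<dots> = monom 1 1 * (\<Sum>S\<in>Pow A. monom 1 (card S))" by (simp add: sum_distrib_left)
  finally show ?case using insert
    by (simp add: monom_Suc one_pCons algebra_simps)
qed


definition bigc :: "nat \<Rightarrow> nat \<Rightarrow> nat set set \<Rightarrow> nat set set" where
  "bigc n d C = {V. V \<subseteq> {1..n} \<and> is_clique d C V \<and> d \<le> card V}"

lemma clique_subset: "is_clique d C V \<Longrightarrow> W \<subseteq> V \<Longrightarrow> is_clique d C W"
  unfolding is_clique_def by blast

lemma uniform_deletion: "uniform_clutter n d C \<Longrightarrow> uniform_clutter n d (deletion C e)"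
  unfolding uniform_clutter_def deletion_def by auto

lemma bigc_empty: "d \<ge> 1 \<Longrightarrow> bigc n d {} = {}"
proof (rule ccontr)
  assume "d \<ge> 1" "bigc n d {} \<noteq> {}"
  then obtain V where V: "V \<subseteq> {1..n}" "is_clique d {} V" "d \<le> card V" unfolding bigc_def by auto
  then obtain T where "T \<subseteq> V" "card T = d" "finite T" using obtain_subset_with_card_n by metis
  then show False using V(2) unfolding is_clique_def by auto
qed

locale simp_step =
  fixes n d C e
  assumes d1: "d \<ge> 1" and uni: "uniform_clutter n d C" and sim: "simplicial n d C e"
begin

definition "NB = open_nbhd n C e"

lemma e_props: "finite e" "card e = d - 1" "e \<subseteq> {1..n}"
proof -
  show "finite e" "card e = d - 1" using sim unfolding simplicial_def submaximal_def by auto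
  from sim obtain F where "F \<in> C" "e \<subseteq> F" unfolding simplicial_def submaximal_def by auto
  then show "e \<subseteq> {1..n}" using uni unfolding uniform_clutter_def by auto
qed

lemma NB_props: "NB \<subseteq> {1..n}" "NB \<inter> e = {}" "finite NB"
proof -
  show "NB \<subseteq> {1..n}" unfolding NB_def open_nbhd_def by auto
  then show "finite NB" by (rule finite_subset) simp
  show "NB \<inter> e = {}"
  proof (rule ccontr)
    assume "NB \<inter> e \<noteq> {}"
    then obtain c where c: "c \<in> NB" "c \<in> e" by auto
    then have "e \<in> C" unfolding NB_def open_nbhd_def by (simp add: insert_absorb)
    then have "card e = d" using uni unfolding uniform_clutter_def by auto
    then show False using e_props d1 by simp
  qed
qed

lemma NB_ge1: "1 \<le> card NB"
proof -
  from sim obtain F where F: "F \<in> C" "e \<subseteq> F" unfolding simplicial_def submaximal_def by auto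
  have cF: "card F = d" "F \<subseteq> {1..n}" using F uni unfolding uniform_clutter_def by auto
  have fF: "finite F" using cF(2) finite_subset by blast
  have "card (F - e) = 1" using cF e_props F fF d1 by (simp add: card_Diff_subset)
  then obtain c where c: "F - e = {c}" using card_1_singletonE by blast
  then have "F = e \<union> {c}" using F by auto
  then have "c \<in> NB" using F cF c unfolding NB_def open_nbhd_def by auto
  then show ?thesis using NB_props(3) by (metis One_nat_def Suc_leI card_gt_0_iff empty_iff)
qed

lemma NB_le: "card NB \<le> n"
  using card_mono[OF _ NB_props(1)] by simp

lemma big_del: "bigc n d (deletion C e) = {V \<in> bigc n d C. \<not> e \<subseteq> V}"
proof (intro set_eqI iffI)
  fix V assume V: "V \<in> bigc n d (deletion C e)"
  then have cl: "is_clique d (deletion C e) V" and Vn: "V \<subseteq> {1..n}" and cV: "d \<le> card V"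
    unfolding bigc_def by auto
  have fV: "finite V" using Vn finite_subset by blast
  have "is_clique d C V" using cl unfolding is_clique_def deletion_def by blast
  moreover have "\<not> e \<subseteq> V"
  proof
    assume eV: "e \<subseteq> V"
    have "card e < card V" using e_props cV d1 by simp
    then have "\<not> V \<subseteq> e"
    proof -
      assume lt: "card e < card V"
      show "\<not> V \<subseteq> e"
      proof
        assume "V \<subseteq> e"
        then have "card V \<le> card e" by (rule card_mono[OF e_props(1)])
        with lt show False by simp
      qed
    qed
    then obtain c where c: "c \<in> V" "c \<notin> e" by auto
    have "finite (e \<union> {c})" using e_props by simp
    moreover have "card (e \<union> {c}) = d" using e_props c d1 by simp
    moreover have "e \<union> {c} \<subseteq> V" using eV c by auto
    ultimately have "e \<union> {c} \<in> deletion C e" using cl unfolding is_clique_def by blast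
    then show False unfolding deletion_def by auto
  qed
  ultimately show "V \<in> {V \<in> bigc n d C. \<not> e \<subseteq> V}" using Vn cV unfolding bigc_def by auto
next
  fix V assume "V \<in> {V \<in> bigc n d C. \<not> e \<subseteq> V}"
  then have V: "V \<subseteq> {1..n}" "is_clique d C V" "d \<le> card V" "\<not> e \<subseteq> V" unfolding bigc_def by auto
  have "is_clique d (deletion C e) V" using V unfolding is_clique_def deletion_def by blast
  then show "V \<in> bigc n d (deletion C e)" using V unfolding bigc_def by auto
qed

lemma card_eS: "S \<subseteq> NB \<Longrightarrow> card (e \<union> S) = d - 1 + card S"
  using e_props NB_props finite_subset[of S NB] by (subst card_Un_disjoint) auto

lemma big_with: "{V \<in> bigc n d C. e \<subseteq> V} = (\<lambda>S. e \<union> S) ` (Pow NB - {{}})"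
proof (intro set_eqI iffI)
  fix V assume "V \<in> {V \<in> bigc n d C. e \<subseteq> V}"
  then have V: "V \<subseteq> {1..n}" "is_clique d C V" "d \<le> card V" "e \<subseteq> V" unfolding bigc_def by auto
  have fV: "finite V" using V finite_subset by blast
  have "V - e \<subseteq> NB"
  proof
    fix c assume c: "c \<in> V - e"
    have "finite (e \<union> {c})" using e_props by simp
    moreover have "card (e \<union> {c}) = d" using e_props c d1 by simp
    moreover have "e \<union> {c} \<subseteq> V" using V c by auto
    ultimately have "e \<union> {c} \<in> C" using V(2) unfolding is_clique_def by blast
    then show "c \<in> NB" using c V unfolding NB_def open_nbhd_def by auto
  qed
  moreover have "V - e \<noteq> {}"
  proof
    assume "V - e = {}"
    then have "V \<subseteq> e" by auto
    then have "card V \<le> card e" using e_props card_mono by blast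
    then show False using V e_props d1 by simp
  qed
  moreover have "V = e \<union> (V - e)" using V by auto
  ultimately show "V \<in> (\<lambda>S. e \<union> S) ` (Pow NB - {{}})" by blast
next
  fix V assume "V \<in> (\<lambda>S. e \<union> S) ` (Pow NB - {{}})"
  then obtain S where S: "S \<subseteq> NB" "S \<noteq> {}" "V = e \<union> S" by auto
  have fS: "finite S" using S NB_props finite_subset by blast
  have cl: "is_clique d C (closed_nbhd n C e)" using sim unfolding simplicial_def by auto
  have "V \<subseteq> closed_nbhd n C e" using S unfolding closed_nbhd_def NB_def by auto
  then have "is_clique d C V" using cl clique_subset by blast
  moreover have "V \<subseteq> {1..n}" using S e_props NB_props by auto
  moreover have "card V = d - 1 + card S" using card_eS[OF S(1)] S(3) by simp
  moreover have "card S \<ge> 1" using S fS by (simp add: Suc_leI card_gt_0_iff)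
  ultimately show "V \<in> {V \<in> bigc n d C. e \<subseteq> V}" unfolding bigc_def using S d1 by auto
qed

lemma inj_eS: "inj_on (\<lambda>S. e \<union> S) (Pow NB - {{}})"
proof (rule inj_onI)
  fix S T assume S: "S \<in> Pow NB - {{}}" and T: "T \<in> Pow NB - {{}}" and eq: "e \<union> S = e \<union> T"
  have "S = (e \<union> S) - e" using S NB_props(2) by auto
  also have "\<dots> = (e \<union> T) - e" using eq by simp
  also have "\<dots> = T" using T NB_props(2) by auto
  finally show "S = T" .
qed

lemma big_split: "bigc n d C = bigc n d (deletion C e) \<union> (\<lambda>S. e \<union> S) ` (Pow NB - {{}})"
  "bigc n d (deletion C e) \<inter> (\<lambda>S. e \<union> S) ` (Pow NB - {{}}) = {}"
proof -
  have a: "bigc n d C = {V \<in> bigc n d C. \<not> e \<subseteq> V} \<union> {V \<in> bigc n d C. e \<subseteq> V}" by auto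
  show "bigc n d C = bigc n d (deletion C e) \<union> (\<lambda>S. e \<union> S) ` (Pow NB - {{}})"
    by (subst a) (simp only: big_del big_with)
  show "bigc n d (deletion C e) \<inter> (\<lambda>S. e \<union> S) ` (Pow NB - {{}}) = {}"
    by (simp only: big_del big_with[symmetric]) auto
qed

lemma finite_bigc: "finite (bigc n d X)"
  by (rule finite_subset[of _ "Pow {1..n}"]) (auto simp: bigc_def)

lemma sum_step: "(\<Sum>V\<in>bigc n d C. monom (1::int) (card V)) =
   (\<Sum>V\<in>bigc n d (deletion C e). monom 1 (card V)) + monom 1 (d - 1) * ([:1,1:] ^ card NB - 1)"
proof -
  have fin2: "finite ((\<lambda>S. e \<union> S) ` (Pow NB - {{}}))" using NB_props by simp
  have "(\<Sum>V\<in>bigc n d C. monom (1::int) (card V)) =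
   (\<Sum>V\<in>bigc n d (deletion C e). monom 1 (card V)) + (\<Sum>V\<in>(\<lambda>S. e \<union> S) ` (Pow NB - {{}}). monom 1 (card V))"
    apply (subst big_split(1))
    apply (rule sum.union_disjoint)
    using finite_bigc fin2 big_split(2) by auto
  also have "(\<Sum>V\<in>(\<lambda>S. e \<union> S) ` (Pow NB - {{}}). monom (1::int) (card V))
     = (\<Sum>S\<in>Pow NB - {{}}. monom 1 (d - 1) * monom 1 (card S))"
    using inj_eS by (simp add: sum.reindex card_eS mult_monom)
  also have "\<dots> = monom 1 (d - 1) * (\<Sum>S\<in>Pow NB - {{}}. monom 1 (card S))"
    by (simp add: sum_distrib_left)
  also have "(\<Sum>S\<in>Pow NB - {{}}. monom (1::int) (card S)) = [:1,1:] ^ card NB - 1"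
    using sum_pow_card[OF NB_props(3)] sum.remove[of "Pow NB" "{}" "\<lambda>S. monom (1::int) (card S)"] NB_props(3)
    by simp
  finally show ?thesis .
qed

lemma card_step: "card ` bigc n d C = card ` bigc n d (deletion C e) \<union> {d..d - 1 + card NB}"
proof -
  have "card ` ((\<lambda>S. e \<union> S) ` (Pow NB - {{}})) = {d..d - 1 + card NB}"
  proof (intro set_eqI iffI)
    fix x assume "x \<in> card ` ((\<lambda>S. e \<union> S) ` (Pow NB - {{}}))"
    then obtain S where S: "S \<subseteq> NB" "S \<noteq> {}" "x = card (e \<union> S)" by auto
    have fS: "finite S" using S NB_props finite_subset by blast
    have "card S \<le> card NB" using S NB_props card_mono by blast
    moreover have "card S \<ge> 1" using S fS by (simp add: Suc_leI card_gt_0_iff)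
    ultimately show "x \<in> {d..d - 1 + card NB}" using S card_eS d1 by auto
  next
    fix x assume x: "x \<in> {d..d - 1 + card NB}"
    then have "x - (d - 1) \<le> card NB" by auto
    then obtain S where S: "S \<subseteq> NB" "card S = x - (d - 1)" "finite S"
      using obtain_subset_with_card_n by metis
    have "S \<noteq> {}" using S x d1 by auto
    moreover have "x = card (e \<union> S)" using card_eS S x d1 by auto
    ultimately show "x \<in> card ` ((\<lambda>S. e \<union> S) ` (Pow NB - {{}}))" using S by blast
  qed
  then show ?thesis by (subst big_split(1)) (simp add: image_Un)
qed

end

lemma main_induct:
  assumes "d \<ge> 1" "uniform_clutter n d C" "is_simplicial_order n d C es"
  shows "(\<Sum>V\<in>bigc n d C. monom (1::int) (card V)) =
           monom 1 (d - 1) * (\<Sum>N\<leftarrow>simplicial_numbers n C es. [:1, 1:] ^ N - 1)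
    \<and> card ` bigc n d C = (\<Union>N\<in>set (simplicial_numbers n C es). {d..d - 1 + N})
    \<and> (\<forall>N\<in>set (simplicial_numbers n C es). 1 \<le> N \<and> N \<le> n)"
  using assms(2,3)
proof (induction es arbitrary: C)
  case Nil
  then show ?case using bigc_empty[OF assms(1)] by simp
next
  case (Cons e es)
  interpret simp_step n d C e using assms(1) Cons.prems by unfold_locales auto
  note IH = Cons.IH[OF uniform_deletion[OF Cons.prems(1), of e]] 
  have sn: "simplicial_numbers n C (e # es) = card NB # simplicial_numbers n (deletion C e) es"
    by (simp add: NB_def)
  have IH': "(\<Sum>V\<in>bigc n d (deletion C e). monom (1::int) (card V)) =
           monom 1 (d - 1) * (\<Sum>N\<leftarrow>simplicial_numbers n (deletion C e) es. [:1, 1:] ^ N - 1)"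
    "card ` bigc n d (deletion C e) = (\<Union>N\<in>set (simplicial_numbers n (deletion C e) es). {d..d - 1 + N})"
    "\<forall>N\<in>set (simplicial_numbers n (deletion C e) es). 1 \<le> N \<and> N \<le> n"
    using IH Cons.prems(2) by simp_all
  show ?case unfolding sn
  proof (intro conjI)
    show "(\<Sum>V\<in>bigc n d C. monom (1::int) (card V)) =
           monom 1 (d - 1) * (\<Sum>N\<leftarrow>card NB # simplicial_numbers n (deletion C e) es. [:1, 1:] ^ N - 1)"
      using sum_step IH'(1) by (simp add: distrib_left add.commute)
    show "card ` bigc n d C = (\<Union>N\<in>set (card NB # simplicial_numbers n (deletion C e) es). {d..d - 1 + N})"
      using card_step IH'(2) by (simp add: Un_commute)
    show "\<forall>N\<in>set (card NB # simplicial_numbers n (deletion C e) es). 1 \<le> N \<and> N \<le> n"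
      using IH'(3) NB_ge1 NB_le by simp
  qed
qed



lemma small_sum: "(\<Sum>V\<in>{V. V \<subseteq> {1..n} \<and> card V < d}. monom (1::int) (card V)) =
   (\<Sum>i<d. monom (int (n choose i)) i)"
proof -
  let ?A = "\<lambda>i. {V. V \<subseteq> {1..n} \<and> card V = i}"
  have eq: "{V. V \<subseteq> {1..n} \<and> card V < d} = (\<Union>i\<in>{..<d}. ?A i)" by auto
  have fin: "\<And>i. finite (?A i)" by (rule finite_subset[of _ "Pow {1..n}"]) auto
  have "(\<Sum>V\<in>(\<Union>i\<in>{..<d}. ?A i). monom (1::int) (card V)) = (\<Sum>i<d. \<Sum>V\<in>?A i. monom 1 (card V))"
    by (rule sum.UNION_disjoint) (auto simp: fin)
  also have "\<dots> = (\<Sum>i<d. monom (int (n choose i)) i)"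
  proof (rule sum.cong, simp)
    fix i
    have "(\<Sum>V\<in>?A i. monom (1::int) (card V)) = (\<Sum>V\<in>?A i. monom 1 i)" by simp
    also have "\<dots> = of_nat (card (?A i)) * monom 1 i" by simp
    also have "card (?A i) = n choose i" using n_subsets[of "{1..n}" i] by simp
    finally show "(\<Sum>V\<in>?A i. monom (1::int) (card V)) = monom (int (n choose i)) i"
      by (simp add: of_nat_poly smult_monom)
  qed
  finally show ?thesis using eq by simp
qed

lemma cc_eq: "clique_complex n d C = {V. V \<subseteq> {1..n} \<and> card V < d} \<union> bigc n d C"
proof (intro set_eqI iffI)
  fix V assume "V \<in> clique_complex n d C"
  then show "V \<in> {V. V \<subseteq> {1..n} \<and> card V < d} \<union> bigc n d C"
    unfolding clique_complex_def bigc_def by auto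
next
  fix V assume V: "V \<in> {V. V \<subseteq> {1..n} \<and> card V < d} \<union> bigc n d C"
  have "is_clique d C V"
  proof (cases "card V < d")
    case True
    have fV: "finite V" using V finite_subset[of V "{1..n}"] unfolding bigc_def by auto
    show ?thesis unfolding is_clique_def
    proof (intro allI impI)
      fix S assume S: "S \<subseteq> V \<and> card S = d \<and> finite S"
      then have "card S \<le> card V" using card_mono[OF fV] by blast
      then show "S \<in> C" using S True by simp
    qed
  next
    case False then show ?thesis using V unfolding bigc_def by auto
  qed
  then show "V \<in> clique_complex n d C" using V unfolding clique_complex_def bigc_def by auto
qed

lemma f_split: "f_poly (clique_complex n d C) =
   (\<Sum>i<d. monom (int (n choose i)) i) + (\<Sum>V\<in>bigc n d C. monom (1::int) (card V))"
proof -
  have eq: "clique_complex n d C = {V. V \<subseteq> {1..n} \<and> card V < d} \<union> bigc n d C"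
    by (rule cc_eq)
  have f1: "finite {V. V \<subseteq> {1..n} \<and> card V < d}" by (rule finite_subset[of _ "Pow {1..n}"]) auto
  have f2: "finite (bigc n d C)" by (rule finite_subset[of _ "Pow {1..n}"]) (auto simp: bigc_def)
  show ?thesis unfolding f_poly_def eq
    by (subst sum.union_disjoint) (use f1 f2 small_sum in \<open>auto simp: bigc_def\<close>)
qed

theorem proposition2p1:
  fixes n d :: nat and C :: "nat set set" and es :: "nat set list"
  assumes "d \<ge> 1"
    and "uniform_clutter n d C"
    and "is_simplicial_order n d C es"
  shows "(f_poly (clique_complex n d C) =
           (\<Sum>i<d. monom (int (n choose i)) i)
           + monom 1 (d - 1) * (\<Sum>i\<in>{1..n}.
                monom (int (\<Sum>N\<leftarrow>simplicial_numbers n C es. N choose i)) i))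
     \<and> (f_poly (clique_complex n d C) =
           (\<Sum>i<d. monom (int (n choose i)) i)
           + monom 1 (d - 1) * (\<Sum>N\<leftarrow>simplicial_numbers n C es. [:1, 1:] ^ N - 1))
     \<and> (C \<noteq> {} \<longrightarrow> complex_dim (clique_complex n d C) =
           int (Max (set (simplicial_numbers n C es))) + int d - 2)"
proof -
  let ?L = "simplicial_numbers n C es"
  note M = main_induct[OF assms]
  have second: "f_poly (clique_complex n d C) =
           (\<Sum>i<d. monom (int (n choose i)) i)
           + monom 1 (d - 1) * (\<Sum>N\<leftarrow>?L. [:1, 1:] ^ N - 1)"
    using f_split M by simp
  moreover have "f_poly (clique_complex n d C) =
           (\<Sum>i<d. monom (int (n choose i)) i)
           + monom 1 (d - 1) * (\<Sum>i\<in>{1..n}. monom (int (\<Sum>N\<leftarrow>?L. N choose i)) i)"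
    using second sum_list_binom[of ?L n] M by simp
  moreover have "C \<noteq> {} \<longrightarrow> complex_dim (clique_complex n d C) = int (Max (set ?L)) + int d - 2"
  proof
    assume "C \<noteq> {}"
    then have "es \<noteq> []" using assms(3) by (cases es) auto
    then have Lne: "?L \<noteq> []" by (cases es) auto
    let ?m = "Max (set ?L)"
    have mL: "?m \<in> set ?L" using Lne by simp
    have m1: "1 \<le> ?m" using mL M by blast
    have mge: "\<And>N. N \<in> set ?L \<Longrightarrow> N \<le> ?m" by simp
    have eq: "clique_complex n d C = {V. V \<subseteq> {1..n} \<and> card V < d} \<union> bigc n d C"
      by (rule cc_eq)
    have fin: "finite (clique_complex n d C)" unfolding clique_complex_def
      by (rule finite_subset[of _ "Pow {1..n}"]) auto
    have "d - 1 + ?m \<in> card ` bigc n d C" using M mL m1 by auto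
    then have inn: "d - 1 + ?m \<in> card ` clique_complex n d C" using eq by auto
    have le: "\<And>x. x \<in> card ` clique_complex n d C \<Longrightarrow> x \<le> d - 1 + ?m"
    proof -
      fix x assume "x \<in> card ` clique_complex n d C"
      then have "x \<in> card ` {V. V \<subseteq> {1..n} \<and> card V < d} \<or> x \<in> card ` bigc n d C"
        using eq by auto
      then show "x \<le> d - 1 + ?m"
      proof
        assume "x \<in> card ` {V. V \<subseteq> {1..n} \<and> card V < d}"
        then show ?thesis using m1 by auto
      next
        assume "x \<in> card ` bigc n d C"
        then obtain N where "N \<in> set ?L" "x \<in> {d..d - 1 + N}" using M by auto
        then have "N \<le> ?m" "x \<le> d - 1 + N" using mge[of N] by auto
        then show ?thesis by linarith
      qed
    qed
    have "Max (card ` clique_complex n d C) = d - 1 + ?m"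
      by (rule Max_eqI) (use fin inn le in auto)
    then show "complex_dim (clique_complex n d C) = int ?m + int d - 2"
      unfolding complex_dim_def using assms(1) by simp
  qed
  ultimately show ?thesis by blast
qed
end
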